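(* Let $L=[l_{ij}]\in\mathbb R^{m\times m}$ be symmetric with all row sums equal to zero and with $0$ a simple eigenvalue. Let $r\in[0,\pi/2)$ and let $\tilde L^r$ be as defined in the context. Let $\chi_1$ and $\chi_2$ be the smallest eigenvalues of $L$ and of $\tilde L^r$, respectively, on the subspace $\{x\in\mathbb R^m: \mathbf 1^\top x=0\}$ (the orthogonal complement of $\mathbf 1=(1,\dots,1)^\top$). Then $\chi_1\ge\chi_2$.
   Context: For a real symmetric $m\times m$ matrix $M=[m_{ij}]$ with zero row sums and $r\in[0,\pi/2)$, the matrix $\tilde M^r=[\tilde m^r_{ij}]$ is defined by: for $i\ne j$, $\tilde m^r_{ij}=m_{ij}\cos r$ if $m_{ij}\le 0$ and $\tilde m^r_{ij}=m_{ij}$ if $m_{ij}>0$; and $\tilde m^r_{ii}=-\sum_{k\ne i}\tilde m^r_{ik}$. Both $L$ and $\tilde L^r$ are symmetric and leave $\{x:\mathbf 1^\top x=0\}$ invariant. *)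

theory Defs
  imports "HOL-Analysis.Analysis"
begin

definition tilde_mat :: "real \<Rightarrow> real^'n^'n \<Rightarrow> real^'n^'n" where
  "tilde_mat r M = (\<chi> i j. if i \<noteq> j then (if M $ i $ j \<le> 0 then M $ i $ j * cos r else M $ i $ j)
      else - (\<Sum>k\<in>UNIV - {i}. (if M $ i $ k \<le> 0 then M $ i $ k * cos r else M $ i $ k)))"

definition ones_perp :: "(real^'n) set" where
  "ones_perp = {x. (\<Sum>i\<in>UNIV. x $ i) = 0}"

definition eigvals_on_perp :: "real^'n^'n \<Rightarrow> real set" where
  "eigvals_on_perp M = {c. \<exists>x. x \<in> ones_perp \<and> x \<noteq> 0 \<and> M *v x = c *\<^sub>R x}"

definition symmetric_mat :: "real^'n^'n \<Rightarrow> bool" where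
  "symmetric_mat M \<longleftrightarrow> transpose M = M"

definition zero_row_sums :: "real^'n^'n \<Rightarrow> bool" where
  "zero_row_sums M \<longleftrightarrow> (\<forall>i. (\<Sum>j\<in>UNIV. M $ i $ j) = 0)"

text \<open>0 is a simple eigenvalue (for symmetric matrices algebraic = geometric multiplicity).\<close>
definition zero_simple_eigenvalue :: "real^'n^'n \<Rightarrow> bool" where
  "zero_simple_eigenvalue M \<longleftrightarrow> dim {x. M *v x = 0} = 1"

end

theory Submission
  imports Defs
begin
lemma sym_entry: "symmetric_mat M \<Longrightarrow> M $ i $ j = M $ j $ i"
  unfolding symmetric_mat_def by (metis transpose_def vec_lambda_beta)

lemma qform: "x \<bullet> (M *v y) = (\<Sum>i\<in>UNIV. \<Sum>j\<in>UNIV. M $ i $ j * x $ i * y $ j)"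
  by (simp add: inner_vec_def matrix_vector_mult_def sum_distrib_left mult_ac)

lemma dot_sym: assumes "symmetric_mat M" shows "x \<bullet> (M *v y) = y \<bullet> (M *v x)"
proof -
  have "x \<bullet> (M *v y) = (\<Sum>i\<in>UNIV. \<Sum>j\<in>UNIV. M $ i $ j * x $ i * y $ j)" by (rule qform)
  also have "\<dots> = (\<Sum>j\<in>UNIV. \<Sum>i\<in>UNIV. M $ i $ j * x $ i * y $ j)" by (rule sum.swap)
  also have "\<dots> = (\<Sum>j\<in>UNIV. \<Sum>i\<in>UNIV. M $ j $ i * y $ j * x $ i)"
    using sym_entry[OF assms] by (simp add: mult_ac)
  also have "\<dots> = y \<bullet> (M *v x)" by (rule qform[symmetric])
  finally show ?thesis .
qed

lemma perp_img: assumes "symmetric_mat M" "zero_row_sums M" shows "M *v x \<in> ones_perp"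
proof -
  have "(\<Sum>i\<in>UNIV. (M *v x) $ i) = (\<Sum>i\<in>UNIV. \<Sum>j\<in>UNIV. M $ i $ j * x $ j)"
    by (simp add: matrix_vector_mult_def)
  also have "\<dots> = (\<Sum>j\<in>UNIV. \<Sum>i\<in>UNIV. M $ j $ i * x $ j)"
    using sym_entry[OF assms(1)] by (subst sum.swap) simp
  also have "\<dots> = (\<Sum>j\<in>UNIV. x $ j * (\<Sum>i\<in>UNIV. M $ j $ i))"
    by (simp add: sum_distrib_left mult_ac)
  also have "\<dots> = 0" using assms(2) by (simp add: zero_row_sums_def)
  finally show ?thesis by (simp add: ones_perp_def)
qed

lemma lap_psd:
  fixes D :: "'n::finite \<Rightarrow> 'n \<Rightarrow> real"
  assumes sym: "\<And>i j. D i j = D j i" and rs: "\<And>i. (\<Sum>j\<in>UNIV. D i j) = 0"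
    and off: "\<And>i j. i \<noteq> j \<Longrightarrow> D i j \<le> 0"
  shows "(\<Sum>i\<in>UNIV. \<Sum>j\<in>UNIV. D i j * x i * x j) \<ge> 0"
proof -
  have e: "(\<Sum>i\<in>UNIV. \<Sum>j\<in>UNIV. D i j * (x i - x j)^2)
    = (\<Sum>i\<in>UNIV. x i ^2 * (\<Sum>j\<in>UNIV. D i j)) - 2 * (\<Sum>i\<in>UNIV. \<Sum>j\<in>UNIV. D i j * x i * x j)
      + (\<Sum>j\<in>UNIV. x j ^2 * (\<Sum>i\<in>UNIV. D i j))"
    by (simp add: power2_diff algebra_simps sum.distrib sum_subtractf sum_distrib_left sum_distrib_right
        sum.swap[of "\<lambda>i j. D i j * (x j)\<^sup>2"])
  have c: "(\<Sum>i\<in>UNIV. D i j) = 0" for j using rs[of j] sym by simp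
  have le: "(\<Sum>i\<in>UNIV. \<Sum>j\<in>UNIV. D i j * (x i - x j)^2) \<le> 0"
    by (intro sum_nonpos) (metis mult_nonpos_nonneg zero_le_power2 diff_self power2_eq_square mult_zero_right mult_zero_left off)
  show ?thesis using e le by (simp add: rs c)
qed

lemma eig_finite: assumes sym: "symmetric_mat M"
  shows "finite {c. \<exists>x. x \<noteq> 0 \<and> M *v x = c *\<^sub>R (x::real^'n)}" (is "finite ?E")
proof -
  define v where "v c = (SOME x. x \<noteq> 0 \<and> M *v x = c *\<^sub>R x)" for c
  have v: "v c \<noteq> 0 \<and> M *v v c = c *\<^sub>R v c" if "c \<in> ?E" for c
    using that unfolding v_def by (smt (verit) mem_Collect_eq someI_ex)
  have inj: "inj_on v ?E"
  proof (rule inj_onI)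
    fix a b assume a: "a \<in> ?E" and b: "b \<in> ?E" and e: "v a = v b"
    have "a *\<^sub>R v a = b *\<^sub>R v a" using v[OF a] v[OF b] e by metis
    then show "a = b" using v[OF a] by (simp add: scaleR_cancel_right)
  qed
  have orth: "pairwise orthogonal (v ` ?E)"
  proof (unfold pairwise_def, intro ballI impI)
    fix p q assume p: "p \<in> v ` ?E" and q: "q \<in> v ` ?E" and pq: "p \<noteq> q"
    then obtain a b where a: "a \<in> ?E" and b: "b \<in> ?E" and pa: "p = v a" and qb: "q = v b" by blast
    have ne: "v a \<noteq> v b" using pq pa qb by simp
    have "a * (v a \<bullet> v b) = (M *v v a) \<bullet> v b" using v[OF a] by simp
    also have "\<dots> = v b \<bullet> (M *v v a)" by (simp add: inner_commute)
    also have "\<dots> = v a \<bullet> (M *v v b)" by (rule dot_sym[OF sym])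
    also have "\<dots> = b * (v a \<bullet> v b)" using v[OF b] by simp
    finally have "(a - b) * (v a \<bullet> v b) = 0" by (simp add: algebra_simps)
    moreover have "a \<noteq> b" using ne by auto
    ultimately show "orthogonal p q" using pa qb by (simp add: orthogonal_def)
  qed
  have "0 \<notin> v ` ?E" using v by force
  then have "independent (v ` ?E)" using pairwise_orthogonal_independent orth by blast
  then have "finite (v ` ?E)" by (rule independent_imp_finite)
  then show ?thesis using inj finite_imageD by blast
qed

lemma key:
  fixes M :: "real^'n^'n"
  assumes sym: "symmetric_mat M" and zr: "zero_row_sums M" and ex: "\<exists>x\<in>(ones_perp :: (real^'n) set). x \<noteq> 0"
  shows "\<exists>c\<in>eigvals_on_perp M. \<forall>y\<in>ones_perp. c * (y \<bullet> y) \<le> y \<bullet> (M *v y)"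
proof -
  define S where "S = ones_perp \<inter> {x::real^'n. norm x = 1}"
  have sub: "subspace (ones_perp :: (real^'n) set)"
    unfolding subspace_def ones_perp_def by (simp add: sum.distrib sum_distrib_left[symmetric])
  have "closed (ones_perp :: (real^'n) set)" by (rule closed_subspace[OF sub])
  moreover have "closed {x::real^'n. norm x = 1}"
    using closed_sphere[of 0 1] by (simp add: sphere_def)
  ultimately have "compact S" unfolding S_def
    by (simp only: compact_eq_bounded_closed, intro conjI closed_Int) (auto intro: bounded_subset[OF bounded_cball[of 0 1]])
  moreover obtain x :: "real^'n" where x: "x \<in> ones_perp" "x \<noteq> 0" using ex by blast
  then have "x /\<^sub>R norm x \<in> S" using sub unfolding S_def by (simp add: subspace_scale)
  then have "S \<noteq> {}" by blast
  moreover have "continuous_on S (\<lambda>x. x \<bullet> (M *v x))"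
    by (intro continuous_intros linear_continuous_on matrix_vector_mul_linear continuous_on_id)
  ultimately obtain x0 where x0: "x0 \<in> S" and mn: "\<forall>y\<in>S. x0 \<bullet> (M *v x0) \<le> y \<bullet> (M *v y)"
    using continuous_attains_inf by blast
  define c where "c = x0 \<bullet> (M *v x0)"
  have x0p: "x0 \<in> ones_perp" and n1: "norm x0 = 1" using x0 by (auto simp: S_def)
  have bound: "c * (y \<bullet> y) \<le> y \<bullet> (M *v y)" if y: "y \<in> ones_perp" for y
  proof (cases "y = 0")
    case True then show ?thesis by simp
  next
    case False
    define u where "u = y /\<^sub>R norm y"
    have "u \<in> S" using y False sub unfolding S_def u_def by (simp add: subspace_scale)
    then have "c \<le> u \<bullet> (M *v u)" using mn c_def by blast
    also have "u \<bullet> (M *v u) = (y \<bullet> (M *v y)) / (norm y)^2"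
      by (simp add: u_def matrix_vector_mult_scaleR power2_eq_square divide_inverse mult_ac)
    finally show ?thesis using False by (simp add: field_simps dot_square_norm)
  qed
  define w where "w = M *v x0 - c *\<^sub>R x0"
  have wp: "w \<in> ones_perp" unfolding w_def
    by (intro subspace_diff[OF sub] subspace_scale[OF sub] perp_img[OF sym zr] x0p)
  have x0x0: "x0 \<bullet> x0 = 1" using n1 by (simp add: dot_square_norm)
  have zero: "y \<bullet> w = 0" if y: "y \<in> ones_perp" for y
  proof -
    define a where "a = y \<bullet> w"
    define b where "b = y \<bullet> (M *v y) - c * (y \<bullet> y)"
    have b0: "b \<ge> 0" using bound[OF y] b_def by simp
    have "x0 + t *\<^sub>R y \<in> ones_perp" for t
      using sub x0p y by (simp add: subspace_add subspace_scale)
    from bound[OF this] have q: "0 \<le> 2 * t * a + t^2 * b" for t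
    proof -
      fix t
      have h1: "c * ((x0 + t *\<^sub>R y) \<bullet> (x0 + t *\<^sub>R y)) \<le> (x0 + t *\<^sub>R y) \<bullet> (M *v (x0 + t *\<^sub>R y))"
        by (rule bound) fact
      have h2: "(x0 + t *\<^sub>R y) \<bullet> (M *v (x0 + t *\<^sub>R y))
          = c + 2 * t * (y \<bullet> (M *v x0)) + t^2 * (y \<bullet> (M *v y))"
        using dot_sym[OF sym, of x0 y]
        by (simp add: matrix_vector_right_distrib matrix_vector_mult_scaleR inner_add_left inner_add_right c_def power2_eq_square algebra_simps)
      have h3: "(x0 + t *\<^sub>R y) \<bullet> (x0 + t *\<^sub>R y) = 1 + 2 * t * (y \<bullet> x0) + t^2 * (y \<bullet> y)"
        using x0x0 by (simp add: inner_add_left inner_add_right power2_eq_square algebra_simps inner_commute)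
      have h4: "2 * t * a + t^2 * b = (x0 + t *\<^sub>R y) \<bullet> (M *v (x0 + t *\<^sub>R y)) - c * ((x0 + t *\<^sub>R y) \<bullet> (x0 + t *\<^sub>R y))"
        unfolding h2 h3 by (simp add: a_def b_def w_def inner_diff_right algebra_simps)
      show "0 \<le> 2 * t * a + t^2 * b" using h1 h4 by linarith
    qed
    show ?thesis
    proof (rule ccontr)
      assume "y \<bullet> w \<noteq> 0"
      then have a0: "a \<noteq> 0" by (simp add: a_def)
      define t where "t = - a / (b + 1)"
      have bp: "b + 1 \<noteq> 0" using b0 by linarith
      have ta: "a = - t * (b + 1)" using bp by (simp add: t_def)
      have t0: "t \<noteq> 0" using a0 ta by auto
      have "0 \<le> 2 * t * a + t^2 * b" by (rule q)
      also have "2 * t * a + t^2 * b = - (t^2 * (b + 2))"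
        by (simp add: ta power2_eq_square algebra_simps)
      also have "\<dots> < 0"
        using b0 t0 by (simp add: zero_less_mult_iff)
      finally show False by simp
    qed
  qed
  have "w = 0" using zero[OF wp] by simp
  then have "M *v x0 = c *\<^sub>R x0" by (simp add: w_def)
  moreover have "x0 \<noteq> 0" using n1 by auto
  ultimately have "c \<in> eigvals_on_perp M" using x0p by (auto simp: eigvals_on_perp_def)
  then show ?thesis using bound by blast
qed

lemma key2:
  fixes M :: "real^'n^'n"
  assumes sym: "symmetric_mat M" and zr: "zero_row_sums M" and ex: "\<exists>x\<in>(ones_perp :: (real^'n) set). x \<noteq> 0"
  shows "Min (eigvals_on_perp M) \<in> eigvals_on_perp M \<and>
    (\<forall>y\<in>ones_perp. Min (eigvals_on_perp M) * (y \<bullet> y) \<le> y \<bullet> (M *v y))"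
proof -
  obtain c where c: "c \<in> eigvals_on_perp M" and bd: "\<forall>y\<in>ones_perp. c * (y \<bullet> y) \<le> y \<bullet> (M *v y)"
    using key[OF assms] by blast
  have fin: "finite (eigvals_on_perp M)"
    by (rule finite_subset[OF _ eig_finite[OF sym]]) (auto simp: eigvals_on_perp_def)
  have "Min (eigvals_on_perp M) = c"
  proof (rule Min_eqI[OF fin _ c])
    fix b assume "b \<in> eigvals_on_perp M"
    then obtain y where y: "y \<in> ones_perp" "y \<noteq> 0" "M *v y = b *\<^sub>R y" by (auto simp: eigvals_on_perp_def)
    have "c * (y \<bullet> y) \<le> b * (y \<bullet> y)" using bd y by auto
    moreover have "y \<bullet> y > 0" using y by simp
    ultimately show "c \<le> b" by simp
  qed
  then show ?thesis using c bd by simp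
qed

definition fr :: "real \<Rightarrow> real \<Rightarrow> real" where "fr r z = (if z \<le> 0 then z * cos r else z)"

lemma tilde_entry: "tilde_mat r M $ i $ j = (if i \<noteq> j then fr r (M $ i $ j) else - (\<Sum>k\<in>UNIV - {i}. fr r (M $ i $ k)))"
  by (cases "i = j") (simp_all add: tilde_mat_def fr_def)

lemma tilde_sym: assumes "symmetric_mat M" shows "symmetric_mat (tilde_mat r M)"
  unfolding symmetric_mat_def
  by (simp add: vec_eq_iff transpose_def tilde_entry sym_entry[OF assms] eq_commute)

lemma tilde_zr: "zero_row_sums (tilde_mat r M)"
  unfolding zero_row_sums_def
proof
  fix i :: 'a
  have "(\<Sum>j\<in>UNIV. tilde_mat r M $ i $ j) = tilde_mat r M $ i $ i + (\<Sum>j\<in>UNIV - {i}. tilde_mat r M $ i $ j)"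
    by (simp add: sum.remove)
  also have "(\<Sum>j\<in>UNIV - {i}. tilde_mat r M $ i $ j) = (\<Sum>j\<in>UNIV - {i}. fr r (M $ i $ j))"
    by (intro sum.cong) (auto simp: tilde_entry)
  finally show "(\<Sum>j\<in>UNIV. tilde_mat r M $ i $ j) = 0" by (simp add: tilde_entry)
qed

lemma compare:
  fixes L :: "real^'n^'n"
  assumes sym: "symmetric_mat L" and zr: "zero_row_sums L" and r: "0 \<le> r" "r < pi / 2"
  shows "x \<bullet> (tilde_mat r L *v x) \<le> x \<bullet> (L *v x)"
proof -
  define T where "T = tilde_mat r L"
  define D where "D i j = L $ i $ j - T $ i $ j" for i j
  have c1: "cos r \<le> 1" by simp
  have "(\<Sum>i\<in>UNIV. \<Sum>j\<in>UNIV. D i j * x $ i * x $ j) \<ge> 0"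
  proof (rule lap_psd)
    show "D i j = D j i" for i j
      using sym_entry[OF sym] sym_entry[OF tilde_sym[OF sym]] by (simp add: D_def T_def)
    show "(\<Sum>j\<in>UNIV. D i j) = 0" for i
      using zr tilde_zr[of r L] by (simp add: D_def T_def sum_subtractf zero_row_sums_def)
    show "D i j \<le> 0" if "i \<noteq> j" for i j
    proof -
      have "L $ i $ j - L $ i $ j * cos r \<le> 0" if "L $ i $ j \<le> 0"
      proof -
        have "L $ i $ j * (1 - cos r) \<le> 0" using that c1 by (simp add: mult_nonpos_nonneg)
        then show ?thesis by (simp add: algebra_simps)
      qed
      then show ?thesis using \<open>i \<noteq> j\<close> by (simp add: D_def T_def tilde_entry fr_def)
    qed
  qed
  moreover have "(\<Sum>i\<in>UNIV. \<Sum>j\<in>UNIV. D i j * x $ i * x $ j) = x \<bullet> (L *v x) - x \<bullet> (T *v x)"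
    by (simp add: qform D_def sum_subtractf[symmetric] algebra_simps)
  ultimately show ?thesis by (simp add: T_def)
qed

theorem lemma2:
  fixes L :: "real^'n^'n" and r :: real
  assumes "symmetric_mat L"
    and "zero_row_sums L"
    and "zero_simple_eigenvalue L"
    and "0 \<le> r" and "r < pi / 2"
  shows "Min (eigvals_on_perp L) \<ge> Min (eigvals_on_perp (tilde_mat r L))"
proof (cases "\<exists>x\<in>(ones_perp :: (real^'n) set). x \<noteq> 0")
  case False
  then have "eigvals_on_perp L = {}" "eigvals_on_perp (tilde_mat r L) = {}"
    by (auto simp: eigvals_on_perp_def)
  then show ?thesis by simp
next
  case True
  note A = key2[OF assms(1,2) True]
  note B = key2[OF tilde_sym[OF assms(1)] tilde_zr True]
  obtain x where x: "x \<in> ones_perp" "x \<noteq> 0" "L *v x = Min (eigvals_on_perp L) *\<^sub>R x"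
    using A by (auto simp: eigvals_on_perp_def)
  have "Min (eigvals_on_perp (tilde_mat r L)) * (x \<bullet> x) \<le> x \<bullet> (tilde_mat r L *v x)"
    using B x by blast
  also have "\<dots> \<le> x \<bullet> (L *v x)" by (rule compare[OF assms(1,2,4,5)])
  also have "\<dots> = Min (eigvals_on_perp L) * (x \<bullet> x)" using x by simp
  finally show ?thesis using x by simp
qed

end
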